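(* Let $m\ge1$, $n=2^m-1$, and let $\iota,\kappa\in\dot F^m$ be such that the Hamming distances $d(\iota,0^m)$, $d(\kappa,0^m)$ and $d(\iota,\kappa)$ are all at least $3$. Then the sets $R_\iota+\hat\iota+\bar e^{(\iota)}$ and $R_\kappa+\hat\kappa+\bar e^{(\kappa)}$ are disjoint, and neither of them contains $0^n$.
   Context: $F^m$ denotes the vector space of binary $m$-tuples over $GF(2)$, and $\dot F^m := F^m\setminus\{0^m\}$. Let $\pi^{(1)}=(10\ldots0),\ldots,\pi^{(m)}=(0\ldots01)$ be the standard basis of $F^m$. The coordinates of words $\bar w\in F^n$ ($n=2^m-1$) are indexed by the elements of $\dot F^m$, $\bar w=\{w_\alpha\}_{\alpha\in\dot F^m}$, where the first $m$ coordinates have indices $\pi^{(1)},\ldots,\pi^{(m)}$ (in this order) and the remaining $n-m$ indices are in some fixed order. $\bar e^{(\iota)}\in F^n$ is the word with a single $1$ in the coordinate indexed by $\iota$. For $\alpha\in F^m$, $\hat\alpha := (\alpha,0^{n-m})\in F^n$, i.e. $\hat\alpha=\sum_{i=1}^m \alpha_i \bar e^{(\pi^{(i)})}$. The Hamming code is $H:=\{\bar c\in F^n \mid \sum_{\alpha\in\dot F^m} c_\alpha\alpha = 0^m\}$. For $\iota\in\dot F^m$, $R_\iota := \{\bar c\in H \mid c_\alpha=c_{\alpha+\iota} \text{ for all } \alpha\in F^m\setminus\{0^m,\iota\}\}$. $d(\cdot,\cdot)$ is the Hamming distance. *)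

theory Defs
  imports Main "HOL-Library.Z2"
begin

text \<open>Binary m-tuples: functions nat => bit supported on {0..<m}.
  Words of F^n (n = 2^m - 1): functions from m-tuples to bit, supported on the
  nonzero m-tuples (coordinates indexed by the elements of dot F^m).\<close>

type_synonym vec = "nat \<Rightarrow> bit"
type_synonym word = "vec \<Rightarrow> bit"

definition zvec :: vec where "zvec = (\<lambda>_. 0)"

definition Fm :: "nat \<Rightarrow> vec set" where
  "Fm m = {a. \<forall>i. m \<le> i \<longrightarrow> a i = 0}"

definition Fdot :: "nat \<Rightarrow> vec set" where
  "Fdot m = Fm m - {zvec}"

definition vadd :: "vec \<Rightarrow> vec \<Rightarrow> vec" where
  "vadd a b = (\<lambda>i. a i + b i)"

definition Words :: "nat \<Rightarrow> word set" where
  "Words m = {w. \<forall>\<alpha>. \<alpha> \<notin> Fdot m \<longrightarrow> w \<alpha> = 0}"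

definition zword :: word where "zword = (\<lambda>_. 0)"

definition wadd :: "word \<Rightarrow> word \<Rightarrow> word" where
  "wadd v w = (\<lambda>\<alpha>. v \<alpha> + w \<alpha>)"

text \<open>standard basis vector pi^(i) (0-based index i < m)\<close>
definition basis :: "nat \<Rightarrow> vec" where
  "basis i = (\<lambda>j. if j = i then 1 else 0)"

definition ew :: "nat \<Rightarrow> vec \<Rightarrow> word" where
  "ew m \<iota> = (\<lambda>\<beta>. if \<beta> = \<iota> \<and> \<beta> \<in> Fdot m then 1 else 0)"

definition hat :: "nat \<Rightarrow> vec \<Rightarrow> word" where
  "hat m \<alpha> = (\<lambda>\<beta>. \<Sum>i<m. \<alpha> i * ew m (basis i) \<beta>)"

definition Hamming :: "nat \<Rightarrow> word set" where
  "Hamming m = {c \<in> Words m. (\<lambda>i. \<Sum>\<alpha>\<in>Fdot m. c \<alpha> * \<alpha> i) = zvec}"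

definition Rset :: "nat \<Rightarrow> vec \<Rightarrow> word set" where
  "Rset m \<iota> = {c \<in> Hamming m. \<forall>\<alpha> \<in> Fm m - {zvec, \<iota>}. c \<alpha> = c (vadd \<alpha> \<iota>)}"

definition hdist :: "nat \<Rightarrow> vec \<Rightarrow> vec \<Rightarrow> nat" where
  "hdist m a b = card {i. i < m \<and> a i \<noteq> b i}"

definition shiftedR :: "nat \<Rightarrow> vec \<Rightarrow> word set" where
  "shiftedR m \<iota> = (\<lambda>c. wadd (wadd c (hat m \<iota>)) (ew m \<iota>)) ` Rset m \<iota>"

end

theory Submission
  imports Defs
begin

lemma bit01: "(x::bit) = 0 \<or> x = 1"
  by (cases "x = 0") auto

lemma bit_self: "(x::bit) + x = 0"
  using bit01[of x] by auto

lemma bit_neq_add: "((a::bit) + b \<noteq> c) = (b \<noteq> a + c)"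
  using bit01[of a] bit01[of b] bit01[of c] by auto

lemma hd_sym: "hdist m a b = hdist m b a"
  unfolding hdist_def by (metis)

lemma hd_tri: "hdist m a c \<le> hdist m a b + hdist m b c"
proof -
  have "{i. i < m \<and> a i \<noteq> c i} \<subseteq> {i. i < m \<and> a i \<noteq> b i} \<union> {i. i < m \<and> b i \<noteq> c i}" by auto
  then have "hdist m a c \<le> card ({i. i < m \<and> a i \<noteq> b i} \<union> {i. i < m \<and> b i \<noteq> c i})"
    unfolding hdist_def by (intro card_mono) auto
  also have "\<dots> \<le> hdist m a b + hdist m b c" unfolding hdist_def by (rule card_Un_le)
  finally show ?thesis .
qed

lemma hd_vadd: "hdist m (vadd a b) c = hdist m b (vadd a c)"
proof -
  have "{i. i < m \<and> a i + b i \<noteq> c i} = {i. i < m \<and> b i \<noteq> a i + c i}"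
    using bit_neq_add by blast
  then show ?thesis unfolding hdist_def vadd_def by simp
qed

lemma hd_vadd0: "hdist m (vadd a b) zvec = hdist m a b"
  unfolding hdist_def vadd_def zvec_def using bit_neq_add bit_self
  by (metis add.commute add_0)

lemma hd_basis: "hdist m (basis j) zvec \<le> 1"
proof -
  have "{i. i < m \<and> basis j i \<noteq> zvec i} \<subseteq> {j}" unfolding basis_def zvec_def by auto
  then have "hdist m (basis j) zvec \<le> card {j}" unfolding hdist_def by (intro card_mono) auto
  then show ?thesis by simp
qed

lemma hd_self: "hdist m a a = 0" unfolding hdist_def by simp


lemma hat_zero:
  assumes "hdist m x zvec \<ge> 2" shows "hat m v x = 0"
proof -
  have "\<And>j. x \<noteq> basis j" using assms hd_basis by (metis not_less_eq_eq numeral_2_eq_2 One_nat_def)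
  then show ?thesis unfolding hat_def ew_def by simp
qed

lemma basis_inj: "basis i = basis j \<Longrightarrow> i = j"
  unfolding basis_def by (metis one_neq_zero)

lemma basis_Fdot: "i < m \<Longrightarrow> basis i \<in> Fdot m"
  unfolding Fdot_def Fm_def basis_def zvec_def by (auto dest: fun_cong[where x=i])

lemma hat_basis:
  assumes "i < m" shows "hat m v (basis i) = v i"
proof -
  have "hat m v (basis i) = (\<Sum>j<m. if j = i then v i else 0)"
    unfolding hat_def ew_def using basis_inj basis_Fdot assms
    by (intro sum.cong) auto
  also have "\<dots> = v i" using assms by simp
  finally show ?thesis .
qed

lemma Fm_vadd: "a \<in> Fm m \<Longrightarrow> b \<in> Fm m \<Longrightarrow> vadd a b \<in> Fm m"
  unfolding Fm_def vadd_def by auto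

lemma prop_R:
  assumes c: "c \<in> Rset m \<iota>" and \<alpha>: "\<alpha> \<in> Fm m" "\<alpha> \<noteq> zvec" "\<alpha> \<noteq> \<iota>"
  shows "wadd (wadd c (hat m \<iota>)) (ew m \<iota>) \<alpha> + wadd (wadd c (hat m \<iota>)) (ew m \<iota>) (vadd \<alpha> \<iota>)
       = hat m \<iota> \<alpha> + hat m \<iota> (vadd \<alpha> \<iota>)"
proof -
  have cc: "c \<alpha> = c (vadd \<alpha> \<iota>)" using c \<alpha> unfolding Rset_def by auto
  have "vadd \<alpha> \<iota> \<noteq> \<iota>"
  proof
    assume "vadd \<alpha> \<iota> = \<iota>"
    then have "\<And>k. \<alpha> k + \<iota> k = \<iota> k" unfolding vadd_def by metis
    then have "\<And>k. \<alpha> k = 0" by (metis add.commute add_0 bit_neq_add)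
    then show False using \<alpha>(2) unfolding zvec_def by auto
  qed
  then have e: "ew m \<iota> \<alpha> = 0" "ew m \<iota> (vadd \<alpha> \<iota>) = 0" using \<alpha>(3) unfolding ew_def by auto
  show ?thesis unfolding wadd_def e cc
    using bit01[of "c (vadd \<alpha> \<iota>)"] bit01[of "hat m \<iota> \<alpha>"] bit01[of "hat m \<iota> (vadd \<alpha> \<iota>)"] by auto
qed



lemma hd_vadd_same: "hdist m (vadd a b) b = hdist m a zvec"
proof -
  have "{i. i < m \<and> a i + b i \<noteq> b i} = {i. i < m \<and> a i \<noteq> zvec i}"
  proof (intro Collect_cong conj_cong refl)
    fix i show "(a i + b i \<noteq> b i) = (a i \<noteq> zvec i)"
      unfolding zvec_def using bit01[of "a i"] bit01[of "b i"] by auto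
  qed
  then show ?thesis unfolding hdist_def vadd_def by simp
qed


definition FF :: "nat \<Rightarrow> vec \<Rightarrow> word \<Rightarrow> word" where
  "FF m \<iota> c = wadd (wadd c (hat m \<iota>)) (ew m \<iota>)"

lemma core:
  assumes "\<iota> \<in> Fdot m" and "\<kappa> \<in> Fdot m"
    and d1: "hdist m \<iota> zvec \<ge> 3" and d2: "hdist m \<kappa> zvec \<ge> 3" and d3: "hdist m \<iota> \<kappa> \<ge> 3"
    and i: "i < m" "\<iota> i = 1" "\<kappa> i = 0"
    and c1: "c1 \<in> Rset m \<iota>" and c2: "c2 \<in> Rset m \<kappa>"
    and w: "FF m \<iota> c1 = FF m \<kappa> c2"
  shows False
proof -
  define p where "p = basis i"
  define x1 where "x1 = vadd p \<iota>"
  define x2 where "x2 = vadd p \<kappa>"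
  have x3: "vadd x1 \<kappa> = vadd x2 \<iota>" unfolding x1_def x2_def vadd_def by (simp add: fun_eq_iff ac_simps del: add_bit_eq_xor)
  have Fi: "\<iota> \<in> Fm m" "\<kappa> \<in> Fm m" using assms unfolding Fdot_def by auto
  have pF: "p \<in> Fm m" "p \<noteq> zvec" using basis_Fdot[OF i(1)] unfolding p_def Fdot_def by auto
  have dp: "hdist m p zvec \<le> 1" unfolding p_def by (rule hd_basis)
  have "hdist m \<iota> zvec \<le> hdist m \<iota> p + hdist m p zvec" by (rule hd_tri)
  then have dx1: "hdist m x1 zvec \<ge> 2" unfolding x1_def hd_vadd0 using d1 dp hd_sym[of m p \<iota>] by linarith
  have "hdist m \<kappa> zvec \<le> hdist m \<kappa> p + hdist m p zvec" by (rule hd_tri)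
  then have dx2: "hdist m x2 zvec \<ge> 2" unfolding x2_def hd_vadd0 using d2 dp hd_sym[of m p \<kappa>] by linarith
  have "hdist m \<iota> \<kappa> \<le> hdist m \<iota> x2 + hdist m x2 \<kappa>" by (rule hd_tri)
  moreover have "hdist m x2 \<kappa> = hdist m p zvec" unfolding x2_def by (rule hd_vadd_same)
  ultimately have dix2: "hdist m \<iota> x2 \<ge> 2" using d3 dp by linarith
  have dx3: "hdist m (vadd x1 \<kappa>) zvec \<ge> 2" using dix2 hd_vadd0[of m x1 \<kappa>] hd_vadd[of m p \<iota> \<kappa>]
    unfolding x1_def x2_def by simp
  have dx3': "hdist m (vadd x2 \<iota>) zvec \<ge> 2" using dx3 x3 by simp
  have ne1: "p \<noteq> \<iota>" using dp d1 by auto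
  have ne2: "p \<noteq> \<kappa>" using dp d2 by auto
  have ne3: "x1 \<noteq> \<kappa>"
  proof
    assume "x1 = \<kappa>" then have "hdist m (vadd x1 \<kappa>) zvec = 0" by (simp add: hd_vadd0 hd_self)
    then show False using dx3 by simp
  qed
  have ne4: "x2 \<noteq> \<iota>" using dix2 hd_self by auto
  have ne5: "x1 \<noteq> zvec" using dx1 hd_self by auto
  have ne6: "x2 \<noteq> zvec" using dx2 hd_self by auto
  note ne = ne1 ne2 ne3 ne4 ne5 ne6
  have xF: "x1 \<in> Fm m" "x2 \<in> Fm m" unfolding x1_def x2_def using Fm_vadd pF Fi by auto
  define W where "W = FF m \<iota> c1"
  have W2: "W = FF m \<kappa> c2" using w W_def by simp
  have E1: "W p + W x1 = 1"
    using prop_R[OF c1 pF ne(1)] hat_basis[OF i(1)] hat_zero[OF dx1] i(2)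
    unfolding W_def FF_def x1_def p_def by simp
  have E2: "W p + W x2 = 0"
    using prop_R[OF c2 pF ne(2)] hat_basis[OF i(1)] hat_zero[OF dx2] i(3)
    unfolding W2 FF_def x2_def p_def by simp
  have E3: "W x1 + W (vadd x1 \<kappa>) = 0"
    using prop_R[OF c2 xF(1) ne(5) ne(3)] hat_zero[OF dx1] hat_zero[OF dx3]
    unfolding W2 FF_def by simp
  have E4: "W x2 + W (vadd x1 \<kappa>) = 0"
    using prop_R[OF c1 xF(2) ne(6) ne(4)] hat_zero[OF dx2] hat_zero[OF dx3'] x3
    unfolding W_def FF_def by simp
  show False using E1 E2 E3 E4 bit01[of "W p"] bit01[of "W x1"] bit01[of "W x2"] bit01[of "W (vadd x1 \<kappa>)"]
    by auto
qed

lemma exists_diff: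
  assumes "hdist m a b \<ge> 3" obtains i where "i < m" "a i \<noteq> b i"
proof -
  have "{i. i < m \<and> a i \<noteq> b i} \<noteq> {}" proof
    assume "{i. i < m \<and> a i \<noteq> b i} = {}"
    then have "hdist m a b = 0" unfolding hdist_def by simp
    then show False using assms by simp
  qed
  then show ?thesis using that by blast
qed

lemma zero_case:
  assumes "\<iota> \<in> Fdot m" and d1: "hdist m \<iota> zvec \<ge> 3"
    and c: "c \<in> Rset m \<iota>" and w: "FF m \<iota> c = zword"
  shows False
proof -
  obtain i where i: "i < m" "\<iota> i \<noteq> zvec i" using exists_diff[OF d1] by blast
  then have ii: "\<iota> i = 1" unfolding zvec_def by simp
  define p where "p = basis i"
  define x1 where "x1 = vadd p \<iota>"
  have pF: "p \<in> Fm m" "p \<noteq> zvec" using basis_Fdot[OF i(1)] unfolding p_def Fdot_def by auto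
  have dp: "hdist m p zvec \<le> 1" unfolding p_def by (rule hd_basis)
  have "hdist m \<iota> zvec \<le> hdist m \<iota> p + hdist m p zvec" by (rule hd_tri)
  then have dx1: "hdist m x1 zvec \<ge> 2" unfolding x1_def hd_vadd0 using d1 dp hd_sym[of m p \<iota>] by linarith
  have ne: "p \<noteq> \<iota>" using dp d1 by auto
  have "FF m \<iota> c p + FF m \<iota> c x1 = 1"
    using prop_R[OF c pF ne] hat_basis[OF i(1)] hat_zero[OF dx1] ii
    unfolding FF_def x1_def p_def by simp
  then show False using w unfolding zword_def by simp
qed

theorem lemma3:
  fixes m :: nat and \<iota> \<kappa> :: vec
  assumes "m \<ge> 1"
    and "\<iota> \<in> Fdot m" and "\<kappa> \<in> Fdot m"
    and "hdist m \<iota> zvec \<ge> 3" and "hdist m \<kappa> zvec \<ge> 3" and "hdist m \<iota> \<kappa> \<ge> 3"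
  shows "shiftedR m \<iota> \<inter> shiftedR m \<kappa> = {} \<and> zword \<notin> shiftedR m \<iota> \<and> zword \<notin> shiftedR m \<kappa>"
proof (intro conjI)
  have sh: "shiftedR m v = FF m v ` Rset m v" for v unfolding shiftedR_def by (rule image_cong) (simp_all add: FF_def)
  show "zword \<notin> shiftedR m \<iota>"
  proof
    assume "zword \<in> shiftedR m \<iota>"
    then have "zword \<in> FF m \<iota> ` Rset m \<iota>" by (simp only: sh)
    then obtain c where c: "c \<in> Rset m \<iota>" and z: "zword = FF m \<iota> c" by (rule imageE)
    show False by (rule zero_case[OF assms(2,4) c z[symmetric]])
  qed
  show "zword \<notin> shiftedR m \<kappa>"
  proof
    assume "zword \<in> shiftedR m \<kappa>"
    then have "zword \<in> FF m \<kappa> ` Rset m \<kappa>" by (simp only: sh)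
    then obtain c where c: "c \<in> Rset m \<kappa>" and z: "zword = FF m \<kappa> c" by (rule imageE)
    show False by (rule zero_case[OF assms(3,5) c z[symmetric]])
  qed
  show "shiftedR m \<iota> \<inter> shiftedR m \<kappa> = {}"
  proof (rule ccontr)
    assume "shiftedR m \<iota> \<inter> shiftedR m \<kappa> \<noteq> {}"
    then obtain w0 where "w0 \<in> FF m \<iota> ` Rset m \<iota>" "w0 \<in> FF m \<kappa> ` Rset m \<kappa>"
      unfolding sh by blast
    then obtain c1 c2 where c1: "c1 \<in> Rset m \<iota>" and c2: "c2 \<in> Rset m \<kappa>"
      and w1: "w0 = FF m \<iota> c1" and w2: "w0 = FF m \<kappa> c2" by (elim imageE)
    have w: "FF m \<iota> c1 = FF m \<kappa> c2" using w1 w2 by simp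
    obtain i where i: "i < m" "\<iota> i \<noteq> \<kappa> i" using exists_diff[OF assms(6)] by blast
    show False
    proof (cases "\<iota> i = 1")
      case True
      then have "\<kappa> i = 0" using i(2) True bit01[of "\<kappa> i"] by auto
      then show False using core[OF assms(2-6) i(1) True _ c1 c2 w] by simp
    next
      case False
      then have a: "\<iota> i = 0" "\<kappa> i = 1" using i(2) False bit01[of "\<iota> i"] bit01[of "\<kappa> i"] by auto
      have "hdist m \<kappa> \<iota> \<ge> 3" using assms(6) hd_sym[of m \<kappa> \<iota>] by simp
      then show False using core[OF assms(3,2,5,4) _ i(1) a(2) a(1) c2 c1 w[symmetric]] by simp
    qed
  qed
qed

end
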